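(* Let $\mathcal{A}=\{\alpha_1<\alpha_2<\dots<\alpha_m\}\subset(0,1)$ with $|\mathcal{A}|=m$, and let $d_{\mathcal{A}}=\min_{\alpha\in\mathcal{A}}\min(\alpha,1-\alpha)$. Let $(b_t)_{t\ge1}$ be any sequence of base forecasts with $b_t\in\mathcal{K}$ and $(y_t)_{t\ge1}$ any sequence of real outcomes, and suppose there is $R>0$ with $|y_t-b_t^{\alpha}|\le R$ for all $\alpha\in\mathcal{A}$ and all $t$. Run MultiQT with learning rate $\eta>0$ and initial hidden offset $\tilde\theta_1\in\mathcal{K}$. Then for every $T\ge1$ and every $\alpha\in\mathcal{A}$, $$\Bigg|\frac{1}{T}\sum_{t=1}^T \mathrm{cov}_t^{\alpha}-\alpha\Bigg|\le \frac{2\|\tilde\theta_1\|_2}{\eta T}+\sqrt{\frac{|\mathcal{A}|}{T}+\frac{2R|\mathcal{A}|^{3/2}}{\eta\, d_{\mathcal{A}}\,T}}.$$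
   Context: $\mathcal{K}=\{x\in\mathbb{R}^m: x_1\le x_2\le\dots\le x_m\}$ (coordinates indexed by $\alpha_1,\dots,\alpha_m$), and for a closed convex set $C$, $\Pi_C(x)=\arg\min_{z\in C}\|x-z\|_2^2$ is Euclidean projection; $C-v=\{x-v:x\in C\}$. MultiQT (Multi-Level Quantile Tracker) with learning rate $\eta>0$ and initial hidden offset $\tilde\theta_1\in\mathcal{K}$: for $t=1,2,\dots$, (1) set the played offset $\theta_t=\Pi_{\mathcal{K}-b_t}(\tilde\theta_t)$; (2) output the forecast $q_t=b_t+\theta_t$ (equivalently $q_t=\Pi_{\mathcal{K}}(b_t+\tilde\theta_t)$); (3) after observing $y_t$, set $\mathrm{cov}_t^{\alpha}=\mathbb{1}\{y_t\le q_t^{\alpha}\}$ and update $\tilde\theta_{t+1}^{\alpha}=\tilde\theta_t^{\alpha}-\eta(\mathrm{cov}_t^{\alpha}-\alpha)$ for each $\alpha\in\mathcal{A}$. *)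

theory Defs
  imports "HOL-Analysis.Analysis"
begin

text \<open>Quantile levels are indexed by a finite linearly ordered type 'm (coordinate i
 corresponds to level alpha $ i); vectors in R^m are real ^ 'm with Euclidean norm.\<close>

definition isoK :: "(real ^ 'm::{finite,linorder}) set" where
  "isoK = {x. \<forall>i j. i \<le> j \<longrightarrow> x $ i \<le> x $ j}"

text \<open>Hidden offsets: multiqt_hidden ... s is tilde theta_(s+1); time t runs from 1.\<close>

fun multiqt_hidden ::
  "real \<Rightarrow> real ^ 'm::{finite,linorder} \<Rightarrow> real ^ 'm::{finite,linorder} \<Rightarrow> (nat \<Rightarrow> real ^ 'm::{finite,linorder}) \<Rightarrow> (nat \<Rightarrow> real) \<Rightarrow> nat \<Rightarrow> real ^ 'm::{finite,linorder}"
where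
  "multiqt_hidden eta alpha th1 b y 0 = th1"
| "multiqt_hidden eta alpha th1 b y (Suc s) =
     (let th = multiqt_hidden eta alpha th1 b y s;
          played = closest_point ((\<lambda>x. x - b (Suc s)) ` isoK) th;
          q = b (Suc s) + played
      in th - eta *\<^sub>R (\<chi> i. (if y (Suc s) \<le> q $ i then 1 else 0) - alpha $ i))"

definition multiqt_played ::
  "real \<Rightarrow> real ^ 'm::{finite,linorder} \<Rightarrow> real ^ 'm::{finite,linorder} \<Rightarrow> (nat \<Rightarrow> real ^ 'm::{finite,linorder}) \<Rightarrow> (nat \<Rightarrow> real) \<Rightarrow> nat \<Rightarrow> real ^ 'm::{finite,linorder}"
where
  "multiqt_played eta alpha th1 b y t =
     closest_point ((\<lambda>x. x - b t) ` isoK) (multiqt_hidden eta alpha th1 b y (t - 1))"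

definition multiqt_forecast ::
  "real \<Rightarrow> real ^ 'm::{finite,linorder} \<Rightarrow> real ^ 'm::{finite,linorder} \<Rightarrow> (nat \<Rightarrow> real ^ 'm::{finite,linorder}) \<Rightarrow> (nat \<Rightarrow> real) \<Rightarrow> nat \<Rightarrow> real ^ 'm::{finite,linorder}"
where
  "multiqt_forecast eta alpha th1 b y t = b t + multiqt_played eta alpha th1 b y t"

definition multiqt_cov ::
  "real \<Rightarrow> real ^ 'm::{finite,linorder} \<Rightarrow> real ^ 'm::{finite,linorder} \<Rightarrow> (nat \<Rightarrow> real ^ 'm::{finite,linorder}) \<Rightarrow> (nat \<Rightarrow> real) \<Rightarrow> nat \<Rightarrow> 'm::{finite,linorder} \<Rightarrow> real"
where
  "multiqt_cov eta alpha th1 b y t i =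
     (if y t \<le> multiqt_forecast eta alpha th1 b y t $ i then 1 else 0)"

end

theory Submission
  imports Defs
begin

lemma shiftK_eq: "(\<lambda>x. x - c) ` isoK = {x::real^'m::{finite,linorder}. \<forall>i j. i \<le> j \<longrightarrow> x$i + c$i \<le> x$j + c$j}"
proof (intro set_eqI iffI)
  fix x assume "x \<in> (\<lambda>x. x - c) ` isoK" then show "x \<in> {x. \<forall>i j. i \<le> j \<longrightarrow> x$i + c$i \<le> x$j + c$j}"
    by (auto simp: isoK_def)
next
  fix x assume "x \<in> {x. \<forall>i j. i \<le> j \<longrightarrow> x$i + c$i \<le> x$j + c$j}"
  then have "x + c \<in> isoK" by (auto simp: isoK_def)
  then show "x \<in> (\<lambda>x. x - c) ` isoK" by (rule image_eqI[rotated]) simp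
qed

lemma shiftK_closed: "closed ((\<lambda>x. x - c) ` (isoK::(real^'m::{finite,linorder}) set))"
proof -
  have "{x::real^'m::{finite,linorder}. \<forall>i j. i \<le> j \<longrightarrow> x$i + c$i \<le> x$j + c$j} = (\<Inter>i. \<Inter>j. {x. i \<le> j \<longrightarrow> x$i + c$i \<le> x$j + c$j})"
    by auto
  moreover have "closed {x::real^'m::{finite,linorder}. i \<le> j \<longrightarrow> x$i + c$i \<le> x$j + c$j}" for i j
    by (cases "i \<le> j") (auto intro!: closed_Collect_le continuous_intros)
  ultimately show ?thesis unfolding shiftK_eq by (auto intro!: closed_INT)
qed

lemma shiftK_convex: "convex ((\<lambda>x. x - c) ` (isoK::(real^'m::{finite,linorder}) set))"
  unfolding shiftK_eq convex_def
proof (intro allI impI ballI, simp, intro allI impI)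
  fix x y :: "real^'m::{finite,linorder}" and u v :: real and i j :: 'm
  assume x: "\<forall>i j. i \<le> j \<longrightarrow> x$i + c$i \<le> x$j + c$j" and y: "\<forall>i j. i \<le> j \<longrightarrow> y$i + c$i \<le> y$j + c$j"
    and u: "0 \<le> u" and v: "0 \<le> v" and uv: "u + v = 1" and ij: "i \<le> j"
  have "u * (x$i + c$i) \<le> u * (x$j + c$j)" using x ij u by (simp add: mult_left_mono)
  moreover have "v * (y$i + c$i) \<le> v * (y$j + c$j)" using y ij v by (simp add: mult_left_mono)
  ultimately have "u * x$i + v * y$i + (u+v) * c$i \<le> u * x$j + v * y$j + (u+v) * c$j"
    by (simp add: algebra_simps)
  then show "u * x $ i + v * y $ i + c $ i \<le> u * x $ j + v * y $ j + c $ j" using uv by simp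
qed

lemma shiftK_ne: "(\<lambda>x. x - c) ` (isoK::(real^'m::{finite,linorder}) set) \<noteq> {}"
proof -
  have "0 \<in> isoK" by (simp add: isoK_def)
  then show ?thesis by blast
qed

lemma step_dir:
  fixes q alpha :: "real^'m::{finite,linorder}" and yv :: real
  assumes amono: "\<And>j k. j < k \<Longrightarrow> alpha $ j < alpha $ k" and q: "q \<in> isoK"
  defines "g \<equiv> (\<chi> i. (if yv \<le> q$i then 1 else 0) - alpha$i)"
  shows "\<exists>e>0. q - e *\<^sub>R g \<in> isoK"
proof -
  define D where "D = (\<lambda>(i,j). q$j - q$i) ` {(i,j). q$i < q$j}"
  have fD: "finite D" unfolding D_def by simp
  define e where "e = Min (insert 1 D)"
  have epos: "e > 0" unfolding e_def using fD by (auto simp: D_def)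
  have ele: "e \<le> q$j - q$i" if "q$i < q$j" for i j
    unfolding e_def using fD that by (intro Min_le) (auto simp: D_def)
  have "q$i - e * g$i \<le> q$j - e * g$j" if ij: "i \<le> j" for i j
  proof (cases "i = j")
    case True then show ?thesis by simp
  next
    case False
    with ij have ilj: "i < j" by simp
    have qij: "q$i \<le> q$j" using q ij by (simp add: isoK_def)
    have aij: "alpha$i < alpha$j" using amono ilj by simp
    show ?thesis
    proof (cases "q$i = q$j")
      case True
      then have "g$j - g$i = alpha$i - alpha$j" by (simp add: g_def)
      with aij epos have "e * (g$j - g$i) \<le> 0" by (simp add: mult_nonneg_nonpos)
      then show ?thesis using True by (simp add: algebra_simps)
    next
      case False
      with qij have lt: "q$i < q$j" by simp
      have "g$j - g$i \<le> 1" using aij qij by (auto simp: g_def)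
      then have "e * (g$j - g$i) \<le> e" using epos by (simp add: mult_left_le)
      with ele[OF lt] show ?thesis by (simp add: algebra_simps)
    qed
  qed
  then show ?thesis using epos by (intro exI[of _ e]) (auto simp: isoK_def)
qed

lemma proj_inner_nonneg:
  fixes u c alpha :: "real^'m::{finite,linorder}" and yv :: real
  assumes amono: "\<And>j k. j < k \<Longrightarrow> alpha $ j < alpha $ k"
  defines "S \<equiv> (\<lambda>x. x - c) ` isoK"
  defines "p \<equiv> closest_point S u"
  defines "g \<equiv> (\<chi> i. (if yv \<le> (c + p)$i then 1 else 0) - alpha$i)"
  shows "inner (u - p) g \<ge> 0" and "c + p \<in> isoK"
proof -
  have cl: "closed S" and cv: "convex S" and ne: "S \<noteq> {}"
    unfolding S_def by (rule shiftK_closed shiftK_convex shiftK_ne)+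
  have pS: "p \<in> S" unfolding p_def by (rule closest_point_in_set[OF cl ne])
  then show qK: "c + p \<in> isoK" unfolding S_def by auto
  obtain e where e: "e > 0" "c + p - e *\<^sub>R g \<in> isoK"
    using step_dir[OF amono qK, of yv] unfolding g_def by blast
  have "p - e *\<^sub>R g = (c + p - e *\<^sub>R g) - c" by simp
  then have zS: "p - e *\<^sub>R g \<in> S" unfolding S_def using e(2) by (metis image_eqI)
  have "inner (u - p) ((p - e *\<^sub>R g) - p) \<le> 0"
    by (rule any_closest_point_dot[OF cv cl pS zS]) (auto simp: p_def intro: closest_point_le[OF cl])
  then have "e * inner (u - p) g \<ge> 0" by (simp add: inner_diff_right)
  with e(1) show "inner (u - p) g \<ge> 0" by (simp add: zero_le_mult_iff)
qed

lemma coord_bound: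
  fixes qi ci ai yv R :: real
  assumes "\<bar>yv - ci\<bar> \<le> R" "0 < ai" "ai < 1"
  shows "- ((qi - ci) * ((if yv \<le> qi then 1 else 0) - ai)) \<le> R"
proof (cases "yv \<le> qi")
  case True
  then have "-(qi - ci) \<le> R" using assms by linarith
  moreover have "R \<ge> 0" using assms by linarith
  ultimately have "-(qi - ci) * (1 - ai) \<le> R"
  proof (cases "qi \<le> ci")
    case True
    then have "-(qi - ci) * (1 - ai) \<le> -(qi - ci) * 1" using assms by (intro mult_left_mono) auto
    then show ?thesis using \<open>-(qi - ci) \<le> R\<close> by (metis mult.right_neutral order_trans)
  next
    case False
    then have "-(qi - ci) * (1 - ai) \<le> 0" using assms by (intro mult_nonpos_nonneg) auto
    then show ?thesis using \<open>R \<ge> 0\<close> by linarith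
  qed
  then show ?thesis using True by (simp add: algebra_simps)
next
  case False
  then have "qi - ci \<le> R" using assms by linarith
  moreover have "R \<ge> 0" using assms by linarith
  ultimately have "(qi - ci) * ai \<le> R"
  proof (cases "ci \<le> qi")
    case True
    then have "(qi - ci) * ai \<le> (qi - ci) * 1" using assms by (intro mult_left_mono) auto
    then show ?thesis using \<open>qi - ci \<le> R\<close> by (metis mult.right_neutral order_trans)
  next
    case False
    then have "(qi - ci) * ai \<le> 0" using assms by (intro mult_nonpos_nonneg) auto
    then show ?thesis using \<open>R \<ge> 0\<close> by linarith
  qed
  then show ?thesis using False by simp
qed

lemma aux_lin: "(a1::real) = (x1 + y1 - z1) / 2 \<Longrightarrow> a1 = e1 \<Longrightarrow> y1 = w1 \<Longrightarrow> z1 = x1 - 2 * e1 + w1" by (simp add: field_simps)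

lemma aux_mono: "- (x::real) \<le> c \<Longrightarrow> 0 \<le> e \<Longrightarrow> - 2 * e * x \<le> 2 * e * c"
proof -
  assume h: "- x \<le> c" "0 \<le> e"
  have "(2 * e) * (- x) \<le> (2 * e) * c" using h by (intro mult_left_mono) auto
  then show ?thesis by simp
qed

lemma aux_sum: "0 \<le> (a::real) \<Longrightarrow> - b \<le> c \<Longrightarrow> - (a + b) \<le> c" by simp

lemma aux_fin: "- 2 * e * y \<le> 2 * e * (k * r) \<Longrightarrow> (b::real) \<le> c \<Longrightarrow> n - 2 * e * y + b \<le> n + c + 2 * e * k * r"
  by (simp add: mult.assoc)

lemma norm_step:
  fixes u c alpha :: "real^'m::{finite,linorder}" and yv R eta :: real
  assumes amono: "\<And>j k. j < k \<Longrightarrow> alpha $ j < alpha $ k"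
    and arange: "\<And>j. 0 < alpha $ j \<and> alpha $ j < 1"
    and Rb: "\<And>j. \<bar>yv - c $ j\<bar> \<le> R" and eta: "eta > 0"
  defines "p \<equiv> closest_point ((\<lambda>x. x - c) ` isoK) u"
  defines "g \<equiv> (\<chi> i. (if yv \<le> (c + p)$i then 1 else 0) - alpha$i)"
  shows "(norm (u - eta *\<^sub>R g))^2 \<le> (norm u)^2 + eta^2 * real CARD('m) + 2 * eta * real CARD('m) * R"
proof -
  have i1: "inner (u - p) g \<ge> 0" unfolding g_def p_def by (rule proj_inner_nonneg(1)[OF amono])
  have ci: "- (p$i * g$i) \<le> R" for i
    using coord_bound[OF Rb[of i], of "alpha$i" "(c+p)$i"] arange[of i] by (simp add: g_def)
  have "- inner p g = (\<Sum>i\<in>UNIV. - (p$i * g$i))" by (simp add: inner_vec_def sum_negf)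
  also have "\<dots> \<le> real CARD('m) * R" using sum_bounded_above[of UNIV "\<lambda>i. - (p$i * g$i)" R] ci by auto
  finally have i2: "- inner p g \<le> real CARD('m) * R" .
  have gi: "g$i * g$i \<le> 1" for i
    using arange[of i] by (auto simp: g_def) (smt (verit) mult_le_one mult_nonneg_nonneg)+
  have "inner g g = (\<Sum>i\<in>UNIV. g$i * g$i)" by (simp add: inner_vec_def)
  also have "\<dots> \<le> real CARD('m) * 1" using sum_bounded_above[of UNIV "\<lambda>i. g$i * g$i" 1] gi by auto
  finally have i3: "inner g g \<le> real CARD('m)" by simp
  have "(norm (u - eta *\<^sub>R g))^2 = (norm u)^2 - 2 * eta * inner u g + eta^2 * inner g g"
  proof -
    have a: "inner u (eta *\<^sub>R g) = ((norm u)^2 + (norm (eta *\<^sub>R g))^2 - (norm (u - eta *\<^sub>R g))^2) / 2"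
      by (rule dot_norm_neg)
    have b: "(norm (eta *\<^sub>R g))^2 = eta^2 * inner g g"
      by (simp add: power_mult_distrib power2_norm_eq_inner[symmetric])
    have c: "inner u (eta *\<^sub>R g) = eta * inner u g" by simp
    show ?thesis using aux_lin[OF a c b] by (simp add: mult.assoc)
  qed
  also have "inner u g = inner (u - p) g + inner p g" by (simp add: inner_diff_left)
  finally have eq: "(norm (u - eta *\<^sub>R g))^2 = (norm u)^2 - 2 * eta * (inner (u - p) g + inner p g) + eta^2 * inner g g" .
  have X: "- (inner (u - p) g + inner p g) \<le> real CARD('m) * R" by (rule aux_sum[OF i1 i2])
  have "- 2 * eta * (inner (u - p) g + inner p g) \<le> 2 * eta * (real CARD('m) * R)"
    by (rule aux_mono[OF X less_imp_le[OF eta]])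
  moreover have "eta^2 * inner g g \<le> eta^2 * real CARD('m)" using i3 by (intro mult_left_mono) auto
  ultimately show ?thesis unfolding eq by (rule aux_fin)
qed

lemma hidden_Suc:
  "multiqt_hidden eta alpha th1 b y (Suc s) = multiqt_hidden eta alpha th1 b y s
     - eta *\<^sub>R (\<chi> i. multiqt_cov eta alpha th1 b y (Suc s) i - alpha$i)"
  by (simp add: multiqt_cov_def multiqt_forecast_def multiqt_played_def Let_def)

lemma hidden_comp:
  "(multiqt_hidden eta alpha th1 b y n)$i = th1$i - eta * (\<Sum>t=1..n. multiqt_cov eta alpha th1 b y t i - alpha$i)"
proof (induction n)
  case 0 then show ?case by simp
next
  case (Suc n)
  show ?case unfolding hidden_Suc using Suc by (simp add: algebra_simps)
qed

lemma hidden_norm: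
  fixes alpha th1 :: "real^'m::{finite,linorder}"
  assumes amono: "\<And>j k. j < k \<Longrightarrow> alpha $ j < alpha $ k"
    and arange: "\<And>j. 0 < alpha $ j \<and> alpha $ j < 1"
    and Rb: "\<And>t j. t \<ge> 1 \<Longrightarrow> \<bar>y t - b t $ j\<bar> \<le> R" and eta: "eta > 0"
  shows "(norm (multiqt_hidden eta alpha th1 b y n))^2 \<le> (norm th1)^2 + real n * (eta^2 * real CARD('m) + 2 * eta * real CARD('m) * R)"
proof (induction n)
  case 0 then show ?case by simp
next
  case (Suc s)
  have st: "(norm (multiqt_hidden eta alpha th1 b y (Suc s)))^2 \<le> (norm (multiqt_hidden eta alpha th1 b y s))^2 + eta^2 * real CARD('m) + 2 * eta * real CARD('m) * R"
    using norm_step[OF amono arange, of "y (Suc s)" "b (Suc s)" R eta "multiqt_hidden eta alpha th1 b y s"] Rb[of "Suc s"] eta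
    by (simp add: multiqt_cov_def multiqt_forecast_def multiqt_played_def Let_def)
  show ?case using st Suc by (simp add: algebra_simps)
qed

theorem theorem1:
  fixes alpha :: "real ^ 'm::{finite,linorder}"
    and b :: "nat \<Rightarrow> real ^ 'm::{finite,linorder}" and y :: "nat \<Rightarrow> real"
    and eta R :: real and th1 :: "real ^ 'm::{finite,linorder}" and T :: nat and i :: "'m::{finite,linorder}"
  assumes alpha_mono: "\<And>j k. j < k \<Longrightarrow> alpha $ j < alpha $ k"
    and alpha_range: "\<And>j. 0 < alpha $ j \<and> alpha $ j < 1"
    and b_K: "\<And>t. t \<ge> 1 \<Longrightarrow> b t \<in> isoK"
    and R_pos: "R > 0"
    and R_bound: "\<And>t j. t \<ge> 1 \<Longrightarrow> \<bar>y t - b t $ j\<bar> \<le> R"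
    and eta_pos: "eta > 0"
    and th1_K: "th1 \<in> isoK"
    and T_pos: "T \<ge> 1"
  shows "\<bar>(1 / real T) * (\<Sum>t = 1..T. multiqt_cov eta alpha th1 b y t i) - alpha $ i\<bar>
     \<le> 2 * norm th1 / (eta * real T)
        + sqrt (real CARD('m) / real T
                + 2 * R * (real CARD('m) powr (3/2))
                  / (eta * (MIN j. min (alpha $ j) (1 - alpha $ j)) * real T))"
proof -
  define m where "m = real CARD('m)"
  define N where "N = norm th1"
  define H where "H = multiqt_hidden eta alpha th1 b y T"
  define K where "K = real T * (eta^2 * m + 2 * eta * m * R)"
  define d where "d = (MIN j. min (alpha $ j) (1 - alpha $ j))"
  have m1: "m \<ge> 1" unfolding m_def by (simp add: Suc_le_eq)
  have Tpos: "real T > 0" using T_pos by simp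
  have K0: "K \<ge> 0" unfolding K_def using m1 R_pos eta_pos by simp
  have N0: "N \<ge> 0" unfolding N_def by simp
  have "(norm H)^2 \<le> N^2 + K"
    using hidden_norm[OF alpha_mono alpha_range R_bound eta_pos, where n=T] unfolding H_def N_def K_def m_def by simp
  also have "\<dots> \<le> (N + sqrt K)^2" using K0 N0 by (simp add: power2_sum)
  finally have HN: "norm H \<le> N + sqrt K" by (rule power2_le_imp_le) (use K0 N0 in simp)
  have sum_eq: "(\<Sum>t = 1..T. multiqt_cov eta alpha th1 b y t i) = real T * alpha$i + (th1$i - H$i) / eta"
  proof -
    have "H$i = th1$i - eta * (\<Sum>t=1..T. multiqt_cov eta alpha th1 b y t i - alpha$i)"
      unfolding H_def by (rule hidden_comp)
    then have "(\<Sum>t=1..T. multiqt_cov eta alpha th1 b y t i - alpha$i) = (th1$i - H$i) / eta"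
      using eta_pos by (simp add: field_simps)
    then show ?thesis by (simp add: sum_subtractf)
  qed
  have lhs: "(1 / real T) * (\<Sum>t = 1..T. multiqt_cov eta alpha th1 b y t i) - alpha $ i = (th1$i - H$i) / (eta * real T)"
    unfolding sum_eq using Tpos eta_pos by (simp add: field_simps)
  have "\<bar>th1$i - H$i\<bar> \<le> N + norm H"
    using component_le_norm_cart[of th1 i] component_le_norm_cart[of H i] unfolding N_def by linarith
  also have "\<dots> \<le> 2 * N + sqrt K" using HN by simp
  finally have num: "\<bar>th1$i - H$i\<bar> \<le> 2 * N + sqrt K" .
  have etaT: "eta * real T > 0" using Tpos eta_pos by simp
  have S0: "sqrt K / (eta * real T) = sqrt (m / real T + 2 * m * R / (eta * real T))"
  proof -
    have "sqrt K / (eta * real T) = sqrt (K / (eta * real T)^2)"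
      using etaT by (simp add: real_sqrt_divide)
    also have "K / (eta * real T)^2 = m / real T + 2 * m * R / (eta * real T)"
      unfolding K_def using etaT Tpos eta_pos by (simp add: field_simps power2_eq_square)
    finally show ?thesis .
  qed
  have S1: "sqrt (m / real T + 2 * m * R / (eta * real T))
      \<le> sqrt (m / real T + 2 * R * (m powr (3/2)) / (eta * d * real T))"
  proof -
    have fin: "finite (range (\<lambda>j. min (alpha $ j) (1 - alpha $ j)))" by simp
    have d0: "d > 0" unfolding d_def using alpha_range fin by (subst Min_gr_iff) auto
    have d1: "d \<le> 1" unfolding d_def
      using alpha_range[of i] fin by (intro order_trans[OF Min_le[OF fin]]) auto
    have "m = m powr 1" using m1 by simp
    also have "\<dots> \<le> m powr (3/2)" using m1 by (intro powr_mono) auto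
    also have "\<dots> \<le> m powr (3/2) / d" using d0 d1 by (simp add: le_divide_eq mult_left_le)
    finally have md: "m \<le> m powr (3/2) / d" .
    have "2 * m * R / (eta * real T) = (2 * R / (eta * real T)) * m" by (simp add: field_simps)
    also have "\<dots> \<le> (2 * R / (eta * real T)) * (m powr (3/2) / d)"
      using md R_pos etaT by (intro mult_left_mono) auto
    also have "\<dots> = 2 * R * (m powr (3/2)) / (eta * d * real T)" using d0 by (simp add: field_simps)
    finally show ?thesis by simp
  qed
  have "\<bar>(th1$i - H$i) / (eta * real T)\<bar> \<le> (2 * N + sqrt K) / (eta * real T)"
    using num etaT by (simp add: abs_divide divide_right_mono)
  also have "\<dots> = 2 * N / (eta * real T) + sqrt K / (eta * real T)" by (simp add: add_divide_distrib)
  also have "\<dots> \<le> 2 * N / (eta * real T) + sqrt (m / real T + 2 * R * (m powr (3/2)) / (eta * d * real T))"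
    unfolding S0 using S1 by (rule add_left_mono)
  finally have F: "\<bar>(th1$i - H$i) / (eta * real T)\<bar> \<le> 2 * N / (eta * real T) + sqrt (m / real T + 2 * R * (m powr (3/2)) / (eta * d * real T))" .
  show ?thesis unfolding lhs using F unfolding N_def m_def d_def .
qed

end
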